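(* Let $k>1$ be an integer and $L\in\mathcal L_k$. Then the automorphism group of the subgraph of $\mathcal F_k$ induced on $\phi_k^{-1}(L)$ is uncountable.
   Context: The vertex set $V$ consists of all reduced fractions $p/q$ with $p,q\in\mathbb Z$, $\gcd(p,q)=1$, together with $1/0$; here $p/q$ and $(-p)/(-q)$ denote the same vertex. For vertices define $d(p/q,a/b)=|pb-qa|$. The graph $\mathcal F_k$ has vertex set $V$, with an edge between $p/q$ and $a/b$ exactly when $d(p/q,a/b)=k$. An element $(a,b)\in(\mathbb Z/k\mathbb Z)^2$ is admissible if for $\lambda\in\mathbb Z/k\mathbb Z$, $(\lambda a,\lambda b)=0$ implies $\lambda=0$; $\mathcal L_k$ is the set of admissible elements modulo $v\sim\lambda v$ for units $\lambda\in(\mathbb Z/k\mathbb Z)^*$; $\phi_k:V\to\mathcal L_k$ sends $p/q$ to the class of $(p\bmod k,q\bmod k)$. *)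

theory Defs
  imports Main "HOL-Library.Countable_Set"
begin

text \<open>Vertices: reduced fractions p/q, including 1/0, with p/q and (-p)/(-q) identified.\<close>
definition farey_vertices :: "(int \<times> int) set" where
  "farey_vertices = {(p, q). coprime p q \<and> (q > 0 \<or> (q = 0 \<and> p = 1))}"

definition fdist :: "int \<times> int \<Rightarrow> int \<times> int \<Rightarrow> int" where
  "fdist v w = \<bar>fst v * snd w - snd v * fst w\<bar>"

definition Fk_adj :: "int \<Rightarrow> int \<times> int \<Rightarrow> int \<times> int \<Rightarrow> bool" where
  "Fk_adj k v w \<longleftrightarrow> v \<in> farey_vertices \<and> w \<in> farey_vertices \<and> fdist v w = k"

text \<open>Z/kZ is represented by the residues {0..<k}.\<close>
definition admissible :: "int \<Rightarrow> int \<times> int \<Rightarrow> bool" where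
  "admissible k ab \<longleftrightarrow> fst ab \<in> {0..<k} \<and> snd ab \<in> {0..<k} \<and>
     (\<forall>l\<in>{0..<k}. (l * fst ab) mod k = 0 \<and> (l * snd ab) mod k = 0 \<longrightarrow> l = 0)"

definition unit_equiv :: "int \<Rightarrow> ((int \<times> int) \<times> (int \<times> int)) set" where
  "unit_equiv k = {(ab, cd). admissible k ab \<and> admissible k cd \<and>
     (\<exists>l\<in>{0..<k}. coprime l k \<and> fst cd = (l * fst ab) mod k \<and> snd cd = (l * snd ab) mod k)}"

definition Lk :: "int \<Rightarrow> (int \<times> int) set set" where
  "Lk k = {ab. admissible k ab} // unit_equiv k"

definition phi :: "int \<Rightarrow> int \<times> int \<Rightarrow> (int \<times> int) set" where
  "phi k v = unit_equiv k `` {(fst v mod k, snd v mod k)}"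

definition induced_automorphisms :: "int \<Rightarrow> (int \<times> int) set \<Rightarrow> ((int \<times> int) \<Rightarrow> (int \<times> int)) set" where
  "induced_automorphisms k S = {f. bij_betw f S S \<and> (\<forall>x. x \<notin> S \<longrightarrow> f x = x) \<and>
     (\<forall>x\<in>S. \<forall>y\<in>S. Fk_adj k x y \<longleftrightarrow> Fk_adj k (f x) (f y))}"

end

theory Submission
  imports Defs "HOL-Number_Theory.Number_Theory"
begin


definition F0 :: "int \<Rightarrow> (int \<times> int) set" where
  "F0 k = {w \<in> farey_vertices. k dvd snd w}"

definition sh :: "nat set \<Rightarrow> int \<times> int \<Rightarrow> int" where
  "sh A x = (if snd x > 0 \<and> fst x div snd x \<ge> 0 \<and> nat (fst x div snd x) div 2 \<in> A
     then (if even (fst x div snd x) then 1 else -1) else 0)"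

definition sig :: "int \<Rightarrow> nat set \<Rightarrow> int \<times> int \<Rightarrow> int \<times> int" where
  "sig k A x = (if x \<in> F0 k then (fst x + sh A x * snd x, snd x) else x)"

lemma coprime_shift: "coprime (p + s * q) (q::int) \<longleftrightarrow> coprime p q"
  by (metis add.commute coprime_iff_gcd_eq_1 gcd.commute gcd_add_mult)

lemma sig_in: "x \<in> F0 k \<Longrightarrow> sig k A x \<in> F0 k"
  unfolding sig_def F0_def farey_vertices_def
  by (cases x) (auto simp: coprime_shift sh_def)

lemma div_shift: "(q::int) > 0 \<Longrightarrow> (p + s * q) div q = p div q + s"
  by simp

lemma aux_even: assumes "even (j::int)" "0 \<le> j" shows "nat (j+1) div 2 = nat j div 2"
proof -
  obtain i where i: "j = 2*i" using assms(1) by blast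
  then have "nat (j+1) = 2 * nat i + 1" "nat j = 2 * nat i" using assms(2) by auto
  then show ?thesis by simp
qed

lemma aux_odd: assumes "odd (j::int)" "0 \<le> j" shows "nat (j-1) div 2 = nat j div 2"
proof -
  obtain i where i: "j = 2*i+1" using assms(1) oddE by blast
  then have "nat (j-1) = 2 * nat i" "nat j = 2 * nat i + 1" using assms(2) by auto
  then show ?thesis by simp
qed

lemma odd_ge1: "odd (j::int) \<Longrightarrow> 0 \<le> j \<Longrightarrow> 1 \<le> j"
  by (cases "j = 0") auto

lemma sh_sig: assumes "x \<in> F0 k" shows "sh A (sig k A x) = - sh A x"
proof -
  obtain p q where x: "x = (p,q)" by (cases x)
  show ?thesis
  proof (cases "q > 0")
    case False
    then show ?thesis using assms x by (simp add: sig_def sh_def)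
  next
    case True
    let ?j = "p div q"
    show ?thesis
    proof (cases "?j \<ge> 0 \<and> nat ?j div 2 \<in> A")
      case c: True
      show ?thesis
      proof (cases "even ?j")
        case True
        have "nat (?j + 1) div 2 = nat ?j div 2" using True c aux_even by blast
        then show ?thesis using True c x assms \<open>q>0\<close>
          by (simp add: sig_def sh_def div_shift)
      next
        case False
        have "nat (?j - 1) div 2 = nat ?j div 2" using False c aux_odd by blast
        moreover have "(p - q) div q = p div q - 1" using div_shift[of q p "-1"] \<open>q>0\<close> by simp
        moreover have "1 \<le> p div q" using odd_ge1 False c by blast
        ultimately show ?thesis using False c x assms \<open>q>0\<close>
          by (simp add: sig_def sh_def div_shift)
      qed
    next
      case False
      then show ?thesis using x assms by (auto simp: sig_def sh_def)
    qed
  qed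
qed

lemma sig_sig: "x \<in> F0 k \<Longrightarrow> sig k A (sig k A x) = x"
  using sh_sig[of x k A] sig_in[of x k A] by (cases x) (simp add: sig_def algebra_simps)

lemma sig_snd: "snd (sig k A x) = snd x"
  by (simp add: sig_def)

lemma fdist_shift: "fdist (p + s*q, q) (a + t*b, b) = \<bar>p*b - q*a + (s - t)*q*b\<bar>"
  by (simp add: fdist_def algebra_simps)

lemma F0_snd: "x \<in> F0 k \<Longrightarrow> snd x = 0 \<or> snd x > 0"
  by (auto simp: F0_def farey_vertices_def)

lemma blk_nonadj_lt:
  assumes "(p,q) \<in> F0 k" "(a,b) \<in> F0 k" "k > 1" "q > 0" "b > 0" "p div q < a div b"
  shows "fdist (p,q) (a,b) \<noteq> k"
proof -
  define m where "m = a div b"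
  have "p < m * q"
  proof -
    have "p = q * (p div q) + p mod q" by simp
    moreover have "p mod q < q" using assms(4) by simp
    moreover have "(p div q + 1) * q \<le> m * q" using assms(4,6) m_def by (intro mult_right_mono) auto
    then have "q * (p div q) + q \<le> m * q" by (simp add: algebra_simps)
    ultimately show ?thesis by linarith
  qed
  have kq: "k dvd q" "k dvd b" "coprime a b" using assms(1,2) by (auto simp: F0_def farey_vertices_def)
  have "q \<ge> k" using kq(1) assms(3,4) by (simp add: zdvd_imp_le)
  have "b \<ge> k" using kq(2) assms(3,5) by (simp add: zdvd_imp_le)
  have "a mod b \<noteq> 0"
  proof
    assume "a mod b = 0"
    then have "b dvd a" by auto
    then have "is_unit b" using kq(3) by (meson coprime_common_divisor dvd_refl)
    then show False using \<open>b \<ge> k\<close> assms(3) by simp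
  qed
  then have r1: "a mod b \<ge> 1" using assms(5) by (smt (verit) pos_mod_sign)
  have ea: "a = m * b + a mod b" using m_def by simp
  have "q * a - p * b = q * (a mod b) + b * (m*q - p)" by (subst ea) (simp add: algebra_simps)
  moreover have "q * (a mod b) \<ge> q" using r1 assms(4) by simp
  moreover have "b * (m*q - p) \<ge> b" using \<open>p < m*q\<close> assms(5) by simp
  ultimately have "q * a - p * b \<ge> 2 * k" using \<open>q \<ge> k\<close> \<open>b \<ge> k\<close> by linarith
  then show ?thesis using assms(3) by (simp add: fdist_def)
qed

lemma fdist_sym: "fdist x y = fdist y x"
  by (simp add: fdist_def algebra_simps abs_minus_commute)

lemma blk_nonadj:
  assumes "(p,q) \<in> F0 k" "(a,b) \<in> F0 k" "k > 1" "q > 0" "b > 0" "p div q \<noteq> a div b"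
  shows "fdist (p,q) (a,b) \<noteq> k"
proof (cases "p div q < a div b")
  case True then show ?thesis using blk_nonadj_lt assms by blast
next
  case False
  then have "a div b < p div q" using assms(6) by simp
  then show ?thesis using blk_nonadj_lt[OF assms(2,1,3,5,4)] fdist_sym by metis
qed

lemma sh_blk: "q > 0 \<Longrightarrow> b > 0 \<Longrightarrow> p div q = a div b \<Longrightarrow> sh A (p,q) = sh A (a,b)"
  by (simp add: sh_def)

lemma sig_adj:
  assumes "x \<in> F0 k" "y \<in> F0 k" "k > 1"
  shows "fdist (sig k A x) (sig k A y) = k \<longleftrightarrow> fdist x y = k"
proof -
  obtain p q where x: "x = (p,q)" by (cases x)
  obtain a b where y: "y = (a,b)" by (cases y)
  define s where "s = sh A x"
  define t where "t = sh A y"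
  have sx: "sig k A x = (p + s*q, q)" using assms x s_def by (simp add: sig_def)
  have sy: "sig k A y = (a + t*b, b)" using assms y t_def by (simp add: sig_def)
  have fd: "fdist (sig k A x) (sig k A y) = \<bar>p*b - q*a + (s - t)*q*b\<bar>"
    using sx sy fdist_shift by simp
  show ?thesis
  proof (cases "s = t \<or> q = 0 \<or> b = 0")
    case True
    then have "fdist (sig k A x) (sig k A y) = fdist x y" using fd x y by (auto simp: fdist_def)
    then show ?thesis by simp
  next
    case False
    then have qb: "q > 0" "b > 0" using F0_snd assms x y by fastforce+
    have "p div q \<noteq> a div b"
    proof
      assume "p div q = a div b"
      then have "s = t" using sh_blk[OF qb, of p a A] s_def t_def x y by simp
      then show False using False by simp
    qed
    then have n1: "fdist x y \<noteq> k" using blk_nonadj[of p q k a b] assms qb x y by simp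
    have sxF: "(p + s*q, q) \<in> F0 k" using sig_in[OF assms(1), of A] sx by simp
    have syF: "(a + t*b, b) \<in> F0 k" using sig_in[OF assms(2), of A] sy by simp
    have "sh A (sig k A x) \<noteq> sh A (sig k A y)" using sh_sig assms s_def t_def False by simp
    then have ne: "sh A (p + s*q, q) \<noteq> sh A (a + t*b, b)" using sx sy by simp
    have "(p + s*q) div q \<noteq> (a + t*b) div b"
    proof
      assume "(p + s*q) div q = (a + t*b) div b"
      then have "sh A (p + s*q, q) = sh A (a + t*b, b)" using sh_blk[OF qb] by blast
      then show False using ne by simp
    qed
    then have "fdist (p + s*q, q) (a + t*b, b) \<noteq> k"
      using blk_nonadj[OF sxF syF assms(3) qb] by simp
    then have "fdist (sig k A x) (sig k A y) \<noteq> k" using sx sy by simp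
    then show ?thesis using n1 by simp
  qed
qed

lemma sig_aut: "k > 1 \<Longrightarrow> sig k A \<in> induced_automorphisms k (F0 k)"
  unfolding induced_automorphisms_def
proof (intro CollectI conjI allI impI ballI)
  assume k: "k > 1"
  show "bij_betw (sig k A) (F0 k) (F0 k)"
    by (rule bij_betw_byWitness[where f'="sig k A"]) (auto simp: sig_sig sig_in)
  show "sig k A x = x" if "x \<notin> F0 k" for x using that by (simp add: sig_def)
  fix x y assume xy: "x \<in> F0 k" "y \<in> F0 k"
  have "F0 k \<subseteq> farey_vertices" by (auto simp: F0_def)
  moreover have "sig k A x \<in> F0 k" "sig k A y \<in> F0 k" using xy sig_in by auto
  ultimately show "Fk_adj k x y \<longleftrightarrow> Fk_adj k (sig k A x) (sig k A y)"
    using sig_adj[OF xy k] xy unfolding Fk_adj_def by blast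
qed

lemma sig_inj: assumes "k > 1" shows "inj (sig k)"
proof (rule injI)
  have main: "sig k A \<noteq> sig k B" if "n \<in> A" "n \<notin> B" for A B n
  proof
    assume eq: "sig k A = sig k B"
    define P where "P = 1 + (2 * int n) * k"
    define x where "x = (P, k)"
    have "coprime P k" unfolding P_def using coprime_shift[of 1 "2 * int n" k] by simp
    then have xF: "x \<in> F0 k" using assms by (simp add: x_def F0_def farey_vertices_def)
    have "1 div k = 0" using assms by simp
    then have d: "P div k = 2 * int n" unfolding P_def using assms div_shift[of k 1 "2 * int n"] by simp
    have n2: "nat (2 * int n) div 2 = n" by (simp add: nat_mult_distrib)
    have "sh A x = 1" using d that n2 assms unfolding sh_def x_def by simp
    moreover have "sh B x = 0" using d that n2 assms unfolding sh_def x_def by simp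
    moreover have "sig k A x = sig k B x" using eq by simp
    then have "fst x + sh A x * snd x = fst x + sh B x * snd x" using xF by (simp add: sig_def)
    ultimately show False using assms by (simp add: x_def)
  qed
  fix A B assume eqAB: "sig k A = sig k B"
  show "A = B"
  proof (rule ccontr)
    assume "A \<noteq> B"
    then obtain n where "(n \<in> A \<and> n \<notin> B) \<or> (n \<in> B \<and> n \<notin> A)" by auto
    then show False
    proof
      assume "n \<in> A \<and> n \<notin> B" then show False using main[of n A B] eqAB by simp
    next
      assume "n \<in> B \<and> n \<notin> A" then show False using main[of n B A] eqAB by simp
    qed
  qed
qed

lemma uncountable_nat_sets: "\<not> countable (UNIV :: nat set set)"
proof
  assume c: "countable (UNIV :: nat set set)"
  define f where "f = from_nat_into (UNIV :: nat set set)"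
  have r: "range f = UNIV" unfolding f_def using c by (rule range_from_nat_into[rotated]) simp
  have "{n. n \<notin> f n} \<in> range f" by (simp add: r)
  then obtain m where eq: "{n. n \<notin> f n} = f m" by (rule rangeE)
  have "(m \<in> {n. n \<notin> f n}) = (m \<in> f m)" using eq by (rule arg_cong)
  then have "(m \<notin> f m) = (m \<in> f m)" by (simp only: mem_Collect_eq)
  then show False by (cases "m \<in> f m") simp_all
qed

lemma F0_uncountable: assumes "k > 1" shows "\<not> countable (induced_automorphisms k (F0 k))"
proof
  assume c: "countable (induced_automorphisms k (F0 k))"
  have "range (sig k) \<subseteq> induced_automorphisms k (F0 k)" using sig_aut assms by blast
  then have "countable (range (sig k))" using c by (rule countable_subset)
  then have "countable (UNIV :: nat set set)" by (rule countable_image_inj_on[OF _ sig_inj[OF assms]])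
  then show False using uncountable_nat_sets by simp
qed



definition nrm :: "int \<times> int \<Rightarrow> int \<times> int" where
  "nrm u = (if snd u < 0 \<or> (snd u = 0 \<and> fst u < 0) then (- fst u, - snd u) else u)"

definition neg :: "int \<times> int \<Rightarrow> int \<times> int" where
  "neg u = (- fst u, - snd u)"

definition mat :: "int \<Rightarrow> int \<Rightarrow> int \<Rightarrow> int \<Rightarrow> int \<times> int \<Rightarrow> int \<times> int" where
  "mat a b c d u = (a * fst u + b * snd u, c * fst u + d * snd u)"

lemma mat_coprime:
  assumes "a*d - b*c = 1" "coprime (fst u) (snd u)"
  shows "coprime (fst (mat a b c d u)) (snd (mat a b c d u))"
proof (rule coprimeI)
  fix e assume e1: "e dvd fst (mat a b c d u)" and e2: "e dvd snd (mat a b c d u)"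
  have "e dvd d * fst (mat a b c d u) - b * snd (mat a b c d u)" using e1 e2 by simp
  also have "d * fst (mat a b c d u) - b * snd (mat a b c d u) = (a*d - b*c) * fst u"
    by (simp add: mat_def algebra_simps)
  finally have x: "e dvd fst u" using assms(1) by simp
  have "e dvd a * snd (mat a b c d u) - c * fst (mat a b c d u)" using e1 e2 by simp
  also have "a * snd (mat a b c d u) - c * fst (mat a b c d u) = (a*d - b*c) * snd u"
    by (simp add: mat_def algebra_simps)
  finally have y: "e dvd snd u" using assms(1) by simp
  show "is_unit e" using x y assms(2) coprime_common_divisor by blast
qed

lemma mat_fdist: "a*d - b*c = 1 \<Longrightarrow> fdist (mat a b c d u) (mat a b c d v) = fdist u v"
proof -
  assume h: "a*d - b*c = 1"
  have "fst (mat a b c d u) * snd (mat a b c d v) - snd (mat a b c d u) * fst (mat a b c d v)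
        = (a*d - b*c) * (fst u * snd v - snd u * fst v)"
    by (simp add: mat_def algebra_simps)
  then show ?thesis using h by (simp add: fdist_def)
qed

lemma mat_neg: "mat a b c d (neg u) = neg (mat a b c d u)"
  by (simp add: mat_def neg_def algebra_simps)

lemma nrm_cases: "nrm u = u \<or> nrm u = neg u"
  by (simp add: nrm_def neg_def)

lemma fdist_neg1: "fdist (neg u) v = fdist u v"
proof -
  have "fst (neg u) * snd v - snd (neg u) * fst v = - (fst u * snd v - snd u * fst v)"
    by (simp add: neg_def)
  then show ?thesis unfolding fdist_def by (simp only: abs_minus_cancel)
qed

lemma fdist_neg2: "fdist u (neg v) = fdist u v"
proof -
  have "fst u * snd (neg v) - snd u * fst (neg v) = - (fst u * snd v - snd u * fst v)"
    by (simp add: neg_def)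
  then show ?thesis unfolding fdist_def by (simp only: abs_minus_cancel)
qed

lemma fdist_nrm: "fdist (nrm u) (nrm v) = fdist u v"
  using nrm_cases[of u] nrm_cases[of v] by (elim disjE) (simp_all add: fdist_neg1 fdist_neg2)

lemma coprime_neg: "coprime (fst (neg u)) (snd (neg u)) \<longleftrightarrow> coprime (fst u) (snd u)"
  by (simp add: neg_def)

lemma nrm_farey: assumes "coprime (fst u) (snd u)" shows "nrm u \<in> farey_vertices"
proof -
  obtain p q where u: "u = (p,q)" by (cases u)
  show ?thesis
  proof (cases "q = 0")
    case True
    then have "is_unit p" using assms u by simp
    then have "\<bar>p\<bar> = 1" by simp
    then have "p = 1 \<or> p = -1" by linarith
    then show ?thesis using True u by (auto simp: nrm_def farey_vertices_def)
  next
    case False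
    then show ?thesis using assms u by (auto simp: nrm_def farey_vertices_def)
  qed
qed

lemma nrm_id: "v \<in> farey_vertices \<Longrightarrow> nrm v = v"
  by (auto simp: nrm_def farey_vertices_def)

lemma nrm_neg_id: "v \<in> farey_vertices \<Longrightarrow> nrm (neg v) = v"
  by (auto simp: nrm_def neg_def farey_vertices_def)

lemma nrm_pm_id: "v \<in> farey_vertices \<Longrightarrow> u = v \<or> u = neg v \<Longrightarrow> nrm u = v"
  by (auto simp: nrm_id nrm_neg_id)



lemma adm_of_coprime:
  assumes k: "k > 1" and c: "coprime p q"
  shows "admissible k (p mod k, q mod k)"
  unfolding admissible_def
proof (intro conjI ballI impI)
  show "fst (p mod k, q mod k) \<in> {0..<k}" "snd (p mod k, q mod k) \<in> {0..<k}" using k by auto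
  fix l assume l: "l \<in> {0..<k}"
    and h: "(l * fst (p mod k, q mod k)) mod k = 0 \<and> (l * snd (p mod k, q mod k)) mod k = 0"
  then have "(l * p) mod k = 0" "(l * q) mod k = 0" by (simp_all add: mod_mult_right_eq)
  then have "k dvd l * p" "k dvd l * q" by auto
  then have "k dvd gcd (l * p) (l * q)" by simp
  also have "gcd (l * p) (l * q) = \<bar>l\<bar> * gcd p q" by (simp add: gcd_mult_distrib_int)
  finally have "k dvd l" using c by simp
  then show "l = 0" using l k by (metis atLeastLessThan_iff zdvd_imp_le linorder_not_le order_le_less)
qed

lemma modarith:
  fixes a b k l mu :: int
  assumes "k dvd (a - mu * b)"
  shows "(l * (a mod k)) mod k = (((l * mu) mod k) * (b mod k)) mod k"
proof -
  have "(l * (a mod k)) mod k = (l * a) mod k" by (simp add: mod_mult_right_eq)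
  also have "\<dots> = (l * mu * b) mod k"
  proof -
    have "k dvd l * (a - mu * b)" using assms by simp
    then have "k dvd (l * a - l * mu * b)" by (simp add: algebra_simps)
    then show ?thesis by (simp add: mod_eq_dvd_iff)
  qed
  also have "\<dots> = (((l * mu) mod k) * (b mod k)) mod k" by (simp add: mod_mult_eq)
  finally show ?thesis .
qed

lemma phi_sub:
  assumes k: "k > 1" and adm: "admissible k (fst u' mod k, snd u' mod k)"
    and d1: "k dvd (fst u - mu * fst u')" and d2: "k dvd (snd u - mu * snd u')"
    and cm: "coprime mu k"
  shows "phi k u \<subseteq> phi k u'"
proof
  fix z assume "z \<in> phi k u"
  then have "((fst u mod k, snd u mod k), z) \<in> unit_equiv k" by (simp add: phi_def)
  then obtain l where az: "admissible k z" and l: "l \<in> {0..<k}" "coprime l k"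
      and z1: "fst z = (l * (fst u mod k)) mod k" and z2: "snd z = (l * (snd u mod k)) mod k"
    unfolding unit_equiv_def by auto
  define l' where "l' = (l * mu) mod k"
  have l'r: "l' \<in> {0..<k}" using k by (simp add: l'_def)
  have l'c: "coprime l' k" using k l(2) cm by (simp add: l'_def)
  have "fst z = (l' * (fst u' mod k)) mod k" using z1 modarith[OF d1] l'_def by simp
  moreover have "snd z = (l' * (snd u' mod k)) mod k" using z2 modarith[OF d2] l'_def by simp
  ultimately have "((fst u' mod k, snd u' mod k), z) \<in> unit_equiv k"
    using adm az l'r l'c unfolding unit_equiv_def by auto
  then show "z \<in> phi k u'" by (simp add: phi_def)
qed

lemma phi_eq:
  assumes k: "k > 1" and cu: "coprime (fst u) (snd u)" and cu': "coprime (fst u') (snd u')"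
    and d1: "k dvd (fst u - mu * fst u')" and d2: "k dvd (snd u - mu * snd u')"
    and cm: "coprime mu k"
  shows "phi k u = phi k u'"
proof
  show "phi k u \<subseteq> phi k u'" using phi_sub[OF k adm_of_coprime[OF k cu'] d1 d2 cm] .
  obtain nu where nu: "[mu * nu = 1] (mod k)" using cong_solve_coprime_int[OF cm] by blast
  have "coprime (mu * nu) k" using cong_imp_coprime[OF cong_sym[OF nu]] by simp
  then have cn: "coprime nu k" by simp
  have dn: "k dvd (1 - mu * nu)" using cong_sym[OF nu] by (simp add: cong_iff_dvd_diff)
  have e1: "fst u' - nu * fst u = fst u' * (1 - mu * nu) - nu * (fst u - mu * fst u')"
    by (simp add: algebra_simps)
  have e2: "snd u' - nu * snd u = snd u' * (1 - mu * nu) - nu * (snd u - mu * snd u')"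
    by (simp add: algebra_simps)
  have f1: "k dvd (fst u' - nu * fst u)" unfolding e1 by (rule dvd_diff[OF dvd_mult[OF dn] dvd_mult[OF d1]])
  have f2: "k dvd (snd u' - nu * snd u)" unfolding e2 by (rule dvd_diff[OF dvd_mult[OF dn] dvd_mult[OF d2]])
  show "phi k u' \<subseteq> phi k u" using phi_sub[OF k adm_of_coprime[OF k cu] f1 f2 cn] .
qed



lemma lift:
  fixes a q k :: int
  assumes q: "q \<noteq> 0" and h: "\<And>r. prime r \<Longrightarrow> r dvd a \<Longrightarrow> r dvd q \<Longrightarrow> r dvd k \<Longrightarrow> False"
  shows "\<exists>t. coprime (a + k * t) q"
proof -
  define S where "S = {r \<in> prime_factors q. \<not> r dvd a}"
  define t where "t = prod id S"
  have fin: "finite S" unfolding S_def by simp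
  have "coprime (a + k * t) q"
  proof (rule ccontr)
    assume nc: "\<not> coprime (a + k * t) q"
    define g where "g = gcd (a + k * t) q"
    have "g \<noteq> 0" using q by (simp add: g_def)
    moreover have "\<not> is_unit g" using nc by (simp add: g_def coprime_iff_gcd_eq_1)
    ultimately obtain r where r: "r dvd g" "prime r" using prime_divisor_exists by blast
    have r1: "r dvd a + k * t" "r dvd q" using r(1) by (simp_all add: g_def)
    show False
    proof (cases "r dvd a")
      case True
      then have "r dvd k * t" using r1(1) by (simp add: dvd_add_right_iff)
      then have "r dvd k \<or> r dvd t" using r(2) by (simp add: prime_dvd_mult_iff)
      then show False
      proof
        assume "r dvd k" then show False using h r(2) True r1(2) by blast
      next
        assume "r dvd t"
        then obtain x where x: "x \<in> S" "r dvd x" using prime_dvd_prod_iff[OF fin r(2)] by (auto simp: t_def)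
        have "prime x" using x(1) by (auto simp: S_def in_prime_factors_iff)
        then have "r = x" using primes_dvd_imp_eq r(2) x(2) by blast
        then show False using x(1) True by (simp add: S_def)
      qed
    next
      case False
      then have "r \<in> S" using r(2) r1(2) q by (simp add: S_def in_prime_factors_iff prime_normalize_iff normalize_prime)
      then have "r dvd t" unfolding t_def using fin by (metis dvd_prodI id_apply)
      then have "r dvd k * t" by simp
      then have "r dvd a" using r1(1) by (simp add: dvd_add_left_iff)
      then show False using False by simp
    qed
  qed
  then show ?thesis by blast
qed

lemma transfer:
  assumes S1: "S1 \<subseteq> farey_vertices" and S2: "S2 \<subseteq> farey_vertices"
    and g: "\<And>w. w \<in> S1 \<Longrightarrow> g w \<in> S2" and h: "\<And>v. v \<in> S2 \<Longrightarrow> h v \<in> S1"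
    and hg: "\<And>w. w \<in> S1 \<Longrightarrow> h (g w) = w" and gh: "\<And>v. v \<in> S2 \<Longrightarrow> g (h v) = v"
    and gd: "\<And>w1 w2. w1 \<in> S1 \<Longrightarrow> w2 \<in> S1 \<Longrightarrow> fdist (g w1) (g w2) = fdist w1 w2"
    and unc: "\<not> countable (induced_automorphisms k S1)"
  shows "\<not> countable (induced_automorphisms k S2)"
proof
  assume c2: "countable (induced_automorphisms k S2)"
  define C where "C f = (\<lambda>z. if z \<in> S2 then g (f (h z)) else z)" for f :: "int \<times> int \<Rightarrow> int \<times> int"
  have Cin: "C f \<in> induced_automorphisms k S2" if f: "f \<in> induced_automorphisms k S1" for f
  proof -
    have fb: "bij_betw f S1 S1" and fa: "\<And>x y. x \<in> S1 \<Longrightarrow> y \<in> S1 \<Longrightarrow> Fk_adj k x y \<longleftrightarrow> Fk_adj k (f x) (f y)"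
      using f unfolding induced_automorphisms_def by auto
    have fS: "\<And>x. x \<in> S1 \<Longrightarrow> f x \<in> S1" using fb bij_betwE by blast
    have hb: "bij_betw h S2 S1" by (rule bij_betw_byWitness[where f'=g]) (use gh hg g h in auto)
    have gb: "bij_betw g S1 S2" by (rule bij_betw_byWitness[where f'=h]) (use gh hg g h in auto)
    have "bij_betw (g \<circ> (f \<circ> h)) S2 S2" using bij_betw_trans[OF bij_betw_trans[OF hb fb] gb] .
    moreover have "\<And>z. z \<in> S2 \<Longrightarrow> (g \<circ> (f \<circ> h)) z = C f z" by (simp add: C_def)
    ultimately have b: "bij_betw (C f) S2 S2" using bij_betw_cong by blast
    have o: "\<forall>x. x \<notin> S2 \<longrightarrow> C f x = x" by (simp add: C_def)
    have a: "Fk_adj k x y \<longleftrightarrow> Fk_adj k (C f x) (C f y)" if xy: "x \<in> S2" "y \<in> S2" for x y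
    proof -
      have hx: "h x \<in> S1" "h y \<in> S1" using h xy by auto
      have fhx: "f (h x) \<in> S1" "f (h y) \<in> S1" using fS hx by auto
      have c: "C f x = g (f (h x))" "C f y = g (f (h y))" using xy by (simp_all add: C_def)
      have "Fk_adj k x y \<longleftrightarrow> fdist x y = k" using xy S2 by (auto simp: Fk_adj_def)
      also have "fdist x y = fdist (h x) (h y)" using gd[OF hx] gh xy by simp
      also have "fdist (h x) (h y) = k \<longleftrightarrow> Fk_adj k (h x) (h y)" using hx S1 by (auto simp: Fk_adj_def)
      also have "\<dots> \<longleftrightarrow> Fk_adj k (f (h x)) (f (h y))" using fa hx by blast
      also have "\<dots> \<longleftrightarrow> fdist (f (h x)) (f (h y)) = k" using fhx S1 by (auto simp: Fk_adj_def)
      also have "fdist (f (h x)) (f (h y)) = fdist (C f x) (C f y)" using gd[OF fhx] c by simp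
      also have "fdist (C f x) (C f y) = k \<longleftrightarrow> Fk_adj k (C f x) (C f y)"
      proof -
        have "C f x \<in> S2" "C f y \<in> S2" using c g[OF fhx(1)] g[OF fhx(2)] by simp_all
        then show ?thesis using S2 by (auto simp: Fk_adj_def)
      qed
      finally show ?thesis .
    qed
    show ?thesis unfolding induced_automorphisms_def using b o a by blast
  qed
  have inj: "inj_on C (induced_automorphisms k S1)"
  proof (rule inj_onI)
    fix f1 f2 assume f1: "f1 \<in> induced_automorphisms k S1" and f2: "f2 \<in> induced_automorphisms k S1"
      and eq: "C f1 = C f2"
    have o1: "\<And>x. x \<notin> S1 \<Longrightarrow> f1 x = x" and o2: "\<And>x. x \<notin> S1 \<Longrightarrow> f2 x = x"
      using f1 f2 unfolding induced_automorphisms_def by auto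
    have b1: "bij_betw f1 S1 S1" and b2: "bij_betw f2 S1 S1"
      using f1 f2 unfolding induced_automorphisms_def by auto
    show "f1 = f2"
    proof
      fix w show "f1 w = f2 w"
      proof (cases "w \<in> S1")
        case True
        have "C f1 (g w) = C f2 (g w)" using eq by simp
        then have "g (f1 w) = g (f2 w)" using True g hg by (simp add: C_def)
        then have "h (g (f1 w)) = h (g (f2 w))" by simp
        moreover have "f1 w \<in> S1" "f2 w \<in> S1" using b1 b2 True bij_betwE by blast+
        ultimately show ?thesis using hg by simp
      next
        case False then show ?thesis using o1 o2 by simp
      qed
    qed
  qed
  have "C ` induced_automorphisms k S1 \<subseteq> induced_automorphisms k S2" using Cin by blast
  then have "countable (C ` induced_automorphisms k S1)" using c2 by (rule countable_subset)
  then have "countable (induced_automorphisms k S1)" using inj by (rule countable_image_inj_on)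
  then show False using unc by simp
qed



lemma exists_v0:
  assumes k: "k > 1" and L: "L \<in> Lk k"
  shows "\<exists>v0 \<in> farey_vertices. phi k v0 = L"
proof -
  have "L \<in> {ab. admissible k ab} // unit_equiv k" using L by (simp add: Lk_def)
  then obtain ab where Ldef: "L = unit_equiv k `` {ab}" and ab0: "ab \<in> {ab. admissible k ab}"
    by (rule quotientE)
  have ab: "admissible k ab" using ab0 by simp
  obtain a b where abp: "ab = (a, b)" by (cases ab)
  have ab3: "a \<in> {0..<k} \<and> b \<in> {0..<k} \<and>
     (\<forall>l\<in>{0..<k}. (l * a) mod k = 0 \<and> (l * b) mod k = 0 \<longrightarrow> l = 0)"
    using ab unfolding admissible_def abp fst_conv snd_conv .
  have ar: "0 \<le> a" "a < k" "0 \<le> b" "b < k" using ab3 by auto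
  have adm: "\<forall>l\<in>{0..<k}. (l * a) mod k = 0 \<and> (l * b) mod k = 0 \<longrightarrow> l = 0"
    using ab3 by (rule conjunct2[OF conjunct2])
  define q where "q = b + k"
  have q0: "q > 0" using ar k by (simp add: q_def)
  have hyp: False if r: "prime r" "r dvd a" "r dvd q" "r dvd k" for r
  proof -
    have rb: "r dvd b" using r(3,4) by (simp add: q_def dvd_add_left_iff)
    obtain l where kl: "k = r * l" using r(4) by blast
    have r2: "r \<ge> 2" using r(1) prime_ge_2_int by blast
    have lpos: "l > 0" using kl k r2 zero_less_mult_pos[of r l] by simp
    have "k - l = (r - 1) * l" using kl by (simp add: algebra_simps)
    moreover have "(r - 1) * l > 0" using r2 lpos by simp
    ultimately have llt: "l < k" by linarith
    obtain a' where a': "a = r * a'" using r(2) by blast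
    obtain b' where b': "b = r * b'" using rb by blast
    have "l * a = k * a'" unfolding kl a' by (simp add: ac_simps)
    then have la: "(l * a) mod k = 0" by simp
    have "l * b = k * b'" unfolding kl b' by (simp add: ac_simps)
    then have lb: "(l * b) mod k = 0" by simp
    have lin: "l \<in> {0..<k}" using lpos llt by simp
    have imp: "(l * a) mod k = 0 \<and> (l * b) mod k = 0 \<longrightarrow> l = 0" using bspec[OF adm lin] .
    have "l = 0" using mp[OF imp conjI[OF la lb]] .
    then show False using lpos by simp
  qed
  have "\<exists>t. coprime (a + k * t) q"
  proof (rule lift)
    show "q \<noteq> 0" using q0 by simp
  next
    fix r assume "prime r" "r dvd a" "r dvd q" "r dvd k"
    then show False by (rule hyp)
  qed
  then obtain t where t: "coprime (a + k * t) q" by blast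
  define v0 where "v0 = (a + k * t, q)"
  have vF: "v0 \<in> farey_vertices" using t q0 by (simp add: v0_def farey_vertices_def)
  have "(a + k * t) mod k = a" using ar by simp
  moreover have "q mod k = b" using ar by (simp add: q_def)
  ultimately have "phi k v0 = L" by (simp add: phi_def v0_def Ldef abp)
  then show ?thesis using vF by blast
qed

lemma mat_inv1: "a*d - b*c = 1 \<Longrightarrow> mat d (-b) (-c) a (mat a b c d u) = u"
proof -
  assume h: "a*d - b*c = 1"
  have "d * (a * fst u + b * snd u) + - b * (c * fst u + d * snd u) = (a*d - b*c) * fst u"
    by (simp add: algebra_simps)
  moreover have "- c * (a * fst u + b * snd u) + a * (c * fst u + d * snd u) = (a*d - b*c) * snd u"
    by (simp add: algebra_simps)
  ultimately show ?thesis using h by (simp add: mat_def)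
qed

lemma mat_inv2: "a*d - b*c = 1 \<Longrightarrow> mat a b c d (mat d (-b) (-c) a u) = u"
proof -
  assume h: "a*d - b*c = 1"
  have "a * (d * fst u + - b * snd u) + b * (- c * fst u + a * snd u) = (a*d - b*c) * fst u"
    by (simp add: algebra_simps)
  moreover have "c * (d * fst u + - b * snd u) + d * (- c * fst u + a * snd u) = (a*d - b*c) * snd u"
    by (simp add: algebra_simps)
  ultimately show ?thesis using h by (simp add: mat_def)
qed

lemma phi_nrm:
  assumes k: "k > 1" and c: "coprime (fst z) (snd z)"
  shows "phi k (nrm z) = phi k z"
proof (cases "nrm z = z")
  case True then show ?thesis by simp
next
  case False
  then have n: "nrm z = neg z" using nrm_cases by metis
  have "phi k (neg z) = phi k z"
    by (rule phi_eq[OF k _ c, of _ "-1"]) (use c in \<open>simp_all add: neg_def\<close>)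
  then show ?thesis using n by simp
qed

lemma farey_coprime: "v \<in> farey_vertices \<Longrightarrow> coprime (fst v) (snd v)"
  by (auto simp: farey_vertices_def)

lemma unc_main:
  fixes k :: int and L :: "(int \<times> int) set"
  assumes k: "k > 1" and L: "L \<in> Lk k"
  shows "\<not> countable (induced_automorphisms k {v \<in> farey_vertices. phi k v = L})"
proof -
  obtain v0 where v0F: "v0 \<in> farey_vertices" and v0L: "phi k v0 = L" using exists_v0[OF k L] by blast
  obtain p0 q0 where v0: "v0 = (p0, q0)" by (cases v0)
  have "coprime p0 q0" using v0F v0 by (simp add: farey_vertices_def)
  then obtain u w where "u * p0 + w * q0 = 1" using bezout_int[of p0 q0] by (auto simp: coprime_iff_gcd_eq_1)
  define x where "x = - w"
  define y where "y = u"
  have det: "p0 * y - x * q0 = 1" using \<open>u * p0 + w * q0 = 1\<close> by (simp add: x_def y_def algebra_simps)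
  have det': "y * p0 - (-x) * (-q0) = 1" using det by (simp add: algebra_simps)
  define G where "G = mat p0 x q0 y"
  define H where "H = mat y (-x) (-q0) p0"
  have HG: "H (G z) = z" for z unfolding G_def H_def using mat_inv1[OF det] .
  have GH: "G (H z) = z" for z unfolding G_def H_def using mat_inv2[OF det] .
  define g where "g z = nrm (G z)" for z
  define h where "h z = nrm (H z)" for z
  define S2 where "S2 = {v \<in> farey_vertices. phi k v = L}"
  have S1s: "F0 k \<subseteq> farey_vertices" by (auto simp: F0_def)
  have S2s: "S2 \<subseteq> farey_vertices" by (auto simp: S2_def)
  have Gc: "coprime (fst (G z)) (snd (G z))" if "coprime (fst z) (snd z)" for z
    unfolding G_def using mat_coprime[OF det that] .
  have Hc: "coprime (fst (H z)) (snd (H z))" if "coprime (fst z) (snd z)" for z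
    unfolding H_def using mat_coprime[OF det' that] .
  have gS: "g w \<in> S2" if w: "w \<in> F0 k" for w
  proof -
    obtain a b where wab: "w = (a, b)" by (cases w)
    have cab: "coprime a b" and kb: "k dvd b" using w wab by (auto simp: F0_def farey_vertices_def)
    obtain m where bm: "b = k * m" using kb by blast
    have cak: "coprime a k" using cab bm by simp
    have cG: "coprime (fst (G w)) (snd (G w))" using Gc cab wab by simp
    have "phi k (G w) = phi k v0"
    proof (rule phi_eq[OF k cG _ _ _ cak])
      show "coprime (fst v0) (snd v0)" using v0F by (rule farey_coprime)
      show "k dvd fst (G w) - a * fst v0" using kb by (simp add: G_def mat_def wab v0)
      show "k dvd snd (G w) - a * snd v0" using kb by (simp add: G_def mat_def wab v0)
    qed
    then have "phi k (g w) = L" using phi_nrm[OF k cG] v0L by (simp add: g_def)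
    moreover have "g w \<in> farey_vertices" using nrm_farey[OF cG] by (simp add: g_def)
    ultimately show ?thesis by (simp add: S2_def)
  qed
  have hS: "h v \<in> F0 k" if v: "v \<in> S2" for v
  proof -
    obtain c d where vcd: "v = (c, d)" by (cases v)
    have vF: "v \<in> farey_vertices" and vL: "phi k v = L" using v by (auto simp: S2_def)
    have cv: "coprime (fst v) (snd v)" using vF by (rule farey_coprime)
    have "(c mod k, d mod k) \<in> phi k v"
      using adm_of_coprime[OF k, of c d] cv k vcd unfolding phi_def unit_equiv_def
      by (auto intro!: bexI[of _ 1])
    then have "(c mod k, d mod k) \<in> phi k v0" using vL v0L by simp
    then obtain l where l1: "c mod k = (l * (p0 mod k)) mod k" and l2: "d mod k = (l * (q0 mod k)) mod k"
      unfolding phi_def unit_equiv_def v0 by auto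
    have "c mod k = (l * p0) mod k" using l1 by (simp add: mod_mult_right_eq)
    then have dc: "k dvd c - l * p0" by (simp add: mod_eq_dvd_iff)
    have "d mod k = (l * q0) mod k" using l2 by (simp add: mod_mult_right_eq)
    then have dd: "k dvd d - l * q0" by (simp add: mod_eq_dvd_iff)
    have e: "snd (H v) = p0 * (d - l * q0) - q0 * (c - l * p0)" by (simp add: H_def mat_def vcd algebra_simps)
    have ks: "k dvd snd (H v)" unfolding e using dc dd by (simp add: dvd_diff dvd_mult)
    have cH: "coprime (fst (H v)) (snd (H v))" using Hc cv by simp
    have "k dvd snd (h v)" using ks nrm_cases[of "H v"] by (auto simp: h_def neg_def)
    moreover have "h v \<in> farey_vertices" using nrm_farey[OF cH] by (simp add: h_def)
    ultimately show ?thesis by (simp add: F0_def)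
  qed
  have hg: "h (g w) = w" if w: "w \<in> F0 k" for w
  proof -
    have wF: "w \<in> farey_vertices" using w S1s by blast
    have "H (g w) = w \<or> H (g w) = neg w"
      using nrm_cases[of "G w"] HG[of w] by (auto simp: g_def H_def mat_neg)
    then show ?thesis using nrm_pm_id[OF wF] by (simp add: h_def)
  qed
  have gh: "g (h v) = v" if v: "v \<in> S2" for v
  proof -
    have vF: "v \<in> farey_vertices" using v S2s by blast
    have "G (h v) = v \<or> G (h v) = neg v"
      using nrm_cases[of "H v"] GH[of v] by (auto simp: h_def G_def mat_neg)
    then show ?thesis using nrm_pm_id[OF vF] by (simp add: g_def)
  qed
  have gd: "fdist (g w1) (g w2) = fdist w1 w2" for w1 w2
    unfolding g_def G_def using fdist_nrm mat_fdist[OF det] by simp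
  have "\<not> countable (induced_automorphisms k S2)"
    by (rule transfer[OF S1s S2s gS hS hg gh gd F0_uncountable[OF k]])
  then show ?thesis by (simp add: S2_def)
qed


theorem proposition4p15:
  fixes k :: int and L :: "(int \<times> int) set"
  assumes "k > 1" and "L \<in> Lk k"
  shows "\<not> countable (induced_automorphisms k {v \<in> farey_vertices. phi k v = L})"
  using unc_main[OF assms] .

end
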